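(* Let $G$ be a group, $f:G\to G$ an endomorphism, and $x_0\in G$ such that $f^2(x)=x_0^{-1}f(x)x_0$ for all $x\in G$. Put $x_i=f^i(x_0)$ for $i>0$. If there exist $k\ge1$ and $i\ge0$ with $x_i^k\in\mathrm{im}(f^{i+1})$, then there exist $n\ge1$, an endomorphism $g:G\to G$ with $g\circ g=g$, and $c\in G$ such that $g(x)=c\,f^n(x)\,c^{-1}$ for all $x\in G$ (i.e. some power of $f$ is conjugate to an idempotent endomorphism). *)

theory Defs
  imports "HOL-Algebra.Group"
begin

end

theory Submission
  imports Defs begin

context group begin

lemma cancel1 [simp]: "x \<in> carrier G \<Longrightarrow> y \<in> carrier G \<Longrightarrow> x \<otimes> (inv x \<otimes> y) = y"
  by (simp add: m_assoc[symmetric])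
lemma cancel2 [simp]: "x \<in> carrier G \<Longrightarrow> y \<in> carrier G \<Longrightarrow> inv x \<otimes> (x \<otimes> y) = y"
  by (simp add: m_assoc[symmetric])

lemma conj_solve:
  assumes "a \<in> carrier G" "t \<in> carrier G" "B \<in> carrier G" "inv a \<otimes> t \<otimes> a = B"
  shows "t = a \<otimes> B \<otimes> inv a"
  using assms(4)[symmetric] assms(1-3) by (simp add: m_assoc)

lemma L0:
  fixes k :: nat
  assumes f: "f \<in> hom G G" and y: "y \<in> carrier G"
    and rel: "\<And>x. x \<in> carrier G \<Longrightarrow> f (f x) = inv y \<otimes> f x \<otimes> y"
    and k: "k \<ge> 1" and w: "w \<in> carrier G" "y [^] k = f w"
  shows "(\<lambda>x. y \<otimes> f x \<otimes> inv y) \<in> hom G G \<and>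
         (\<forall>x\<in>carrier G. y \<otimes> f (y \<otimes> f x \<otimes> inv y) \<otimes> inv y = y \<otimes> f x \<otimes> inv y)"
proof -
  have fc: "\<And>x. x \<in> carrier G \<Longrightarrow> f x \<in> carrier G" by (rule hom_in_carrier[OF f])
  have fm: "\<And>a b. a \<in> carrier G \<Longrightarrow> b \<in> carrier G \<Longrightarrow> f (a \<otimes> b) = f a \<otimes> f b"
    by (rule hom_mult[OF f])
  have fi: "\<And>a. a \<in> carrier G \<Longrightarrow> f (inv a) = inv (f a)"
  proof -
    have "group_hom G G f" unfolding group_hom_def group_hom_axioms_def using f group_axioms by simp
    then show "\<And>a. a \<in> carrier G \<Longrightarrow> f (inv a) = inv (f a)" by (rule group_hom.hom_inv)
  qed
  have conjS: "\<exists>z'\<in>carrier G. inv (y [^] j) \<otimes> f z \<otimes> y [^] j = f z'" if z: "z \<in> carrier G" for j :: nat and z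
  proof (induction j)
    case 0 then show ?case using z fc by auto
  next
    case (Suc j)
    then obtain z' where z': "z' \<in> carrier G" "inv (y [^] j) \<otimes> f z \<otimes> y [^] j = f z'" by blast
    have "inv (y [^] Suc j) \<otimes> f z \<otimes> y [^] Suc j = inv y \<otimes> (inv (y [^] j) \<otimes> f z \<otimes> y [^] j) \<otimes> y"
      using y z fc by (simp add: inv_mult_group m_assoc)
    also have "\<dots> = f (f z')" using z' rel by simp
    finally show ?case using z' fc by blast
  qed
  have inS: "\<exists>z'\<in>carrier G. y \<otimes> f z \<otimes> inv y = f z'" if z: "z \<in> carrier G" for z
  proof -
    obtain j where kj: "k = Suc j" using k by (cases k) auto
    obtain z' where z': "z' \<in> carrier G" "inv (y [^] j) \<otimes> f z \<otimes> y [^] j = f z'" using conjS z by blast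
    have yk: "y [^] k = y \<otimes> y [^] j" using kj y nat_pow_Suc2 by simp
    have "y \<otimes> f z \<otimes> inv y = y [^] k \<otimes> (inv (y [^] j) \<otimes> f z \<otimes> y [^] j) \<otimes> inv (y [^] k)"
      using y z fc yk by (simp add: inv_mult_group m_assoc)
    also have "\<dots> = f (w \<otimes> z' \<otimes> inv w)" using w z' fm fi by simp
    finally show ?thesis using w z' by blast
  qed
  have E: "inv (f y) \<otimes> inv y \<otimes> f z \<otimes> y \<otimes> f y = inv y \<otimes> inv y \<otimes> f z \<otimes> y \<otimes> y"
    if z: "z \<in> carrier G" for z
  proof -
    have h1: "f (f (f z)) = inv y \<otimes> f (f z) \<otimes> y" by (rule rel[OF fc[OF z]])
    have "f (f (f z)) = f (inv y \<otimes> f z \<otimes> y)" using rel[OF z] by simp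
    also have "\<dots> = inv (f y) \<otimes> f (f z) \<otimes> f y" using fm fi y fc z by simp
    finally have h2: "f (f (f z)) = inv (f y) \<otimes> f (f z) \<otimes> f y" .
    have "inv (f y) \<otimes> (inv y \<otimes> f z \<otimes> y) \<otimes> f y = inv y \<otimes> (inv y \<otimes> f z \<otimes> y) \<otimes> y"
      using h1 h2 rel[OF z] by simp
    then show ?thesis using y z fc by (simp add: m_assoc)
  qed
  show ?thesis
  proof
    show "(\<lambda>x. y \<otimes> f x \<otimes> inv y) \<in> hom G G"
    proof (rule homI)
      fix a assume "a \<in> carrier G" then show "y \<otimes> f a \<otimes> inv y \<in> carrier G" using y fc by simp
    next
      fix a b assume "a \<in> carrier G" "b \<in> carrier G"
      then show "y \<otimes> f (a \<otimes> b) \<otimes> inv y = (y \<otimes> f a \<otimes> inv y) \<otimes> (y \<otimes> f b \<otimes> inv y)"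
        using y fc fm by (simp add: m_assoc)
    qed
  next
    show "\<forall>x\<in>carrier G. y \<otimes> f (y \<otimes> f x \<otimes> inv y) \<otimes> inv y = y \<otimes> f x \<otimes> inv y"
    proof
      fix x assume x: "x \<in> carrier G"
      obtain z where z: "z \<in> carrier G" "y \<otimes> f x \<otimes> inv y = f z" using inS x by blast
      have "inv (y \<otimes> f y) \<otimes> f z \<otimes> (y \<otimes> f y) = inv y \<otimes> inv y \<otimes> f z \<otimes> y \<otimes> y"
        using E[OF z(1)] z(1) y fc by (simp add: inv_mult_group m_assoc)
      also have "\<dots> = inv y \<otimes> f x \<otimes> y" using z(2)[symmetric] y x fc by (simp add: m_assoc)
      finally have "f z = y \<otimes> f y \<otimes> (inv y \<otimes> f x \<otimes> y) \<otimes> inv (y \<otimes> f y)"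
        using conj_solve[of "y \<otimes> f y" "f z" "inv y \<otimes> f x \<otimes> y"] y fc z x by simp
      then have "y \<otimes> f x \<otimes> inv y = y \<otimes> f y \<otimes> (inv y \<otimes> f x \<otimes> y) \<otimes> inv (y \<otimes> f y)" using z by simp
      moreover have "y \<otimes> f (y \<otimes> f x \<otimes> inv y) \<otimes> inv y = y \<otimes> f y \<otimes> f (f x) \<otimes> inv (f y) \<otimes> inv y"
        using y x fc fm fi by (simp add: m_assoc)
      moreover have "\<dots> = y \<otimes> f y \<otimes> inv y \<otimes> f x \<otimes> y \<otimes> inv (f y) \<otimes> inv y"
        using rel x y fc by (simp add: m_assoc)
      ultimately show "y \<otimes> f (y \<otimes> f x \<otimes> inv y) \<otimes> inv y = y \<otimes> f x \<otimes> inv y"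
        using y x fc by (simp add: m_assoc inv_mult_group)
    qed
  qed
qed

lemma E_lem:
  assumes f: "f \<in> hom G G" and y: "y \<in> carrier G"
    and rel: "\<And>x. x \<in> carrier G \<Longrightarrow> f (f x) = inv y \<otimes> f x \<otimes> y"
    and z: "z \<in> carrier G"
  shows "inv (f y) \<otimes> inv y \<otimes> f z \<otimes> y \<otimes> f y = inv y \<otimes> inv y \<otimes> f z \<otimes> y \<otimes> y"
proof -
  have fc: "\<And>x. x \<in> carrier G \<Longrightarrow> f x \<in> carrier G" by (rule hom_in_carrier[OF f])
  have fm: "\<And>a b. a \<in> carrier G \<Longrightarrow> b \<in> carrier G \<Longrightarrow> f (a \<otimes> b) = f a \<otimes> f b"
    by (rule hom_mult[OF f])
  have "group_hom G G f" unfolding group_hom_def group_hom_axioms_def using f group_axioms by simp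
  then have fi: "\<And>a. a \<in> carrier G \<Longrightarrow> f (inv a) = inv (f a)" by (rule group_hom.hom_inv)
  have h1: "f (f (f z)) = inv y \<otimes> f (f z) \<otimes> y" by (rule rel[OF fc[OF z]])
  have "f (f (f z)) = f (inv y \<otimes> f z \<otimes> y)" using rel[OF z] by simp
  also have "\<dots> = inv (f y) \<otimes> f (f z) \<otimes> f y" using fm fi y fc z by simp
  finally have h2: "f (f (f z)) = inv (f y) \<otimes> f (f z) \<otimes> f y" .
  have "inv (f y) \<otimes> (inv y \<otimes> f z \<otimes> y) \<otimes> f y = inv y \<otimes> (inv y \<otimes> f z \<otimes> y) \<otimes> y"
    using h1 h2 rel[OF z] by simp
  then show ?thesis using y z fc by (simp add: m_assoc)
qed

lemma conj_pow:
  assumes "a \<in> carrier G" "b \<in> carrier G"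
  shows "(a \<otimes> b \<otimes> inv a) [^] (k::nat) = a \<otimes> b [^] k \<otimes> inv a"
proof (induction k)
  case 0 then show ?case using assms by simp
next
  case (Suc k)
  then show ?case using assms by (simp add: m_assoc)
qed

end

theorem corollary3p6:
  fixes G (structure) and f :: "'a \<Rightarrow> 'a" and x0 :: 'a
  assumes "group G"
    and "f \<in> hom G G"
    and "x0 \<in> carrier G"
    and "\<And>x. x \<in> carrier G \<Longrightarrow> f (f x) = inv x0 \<otimes> f x \<otimes> x0"
    and "\<exists>k::nat. \<exists>i::nat. k \<ge> 1 \<and>
           ((f ^^ i) x0) [^] k \<in> (f ^^ (Suc i)) ` carrier G"
  shows "\<exists>n::nat. \<exists>g c. n \<ge> 1 \<and> g \<in> hom G G \<and>
           (\<forall>x\<in>carrier G. g (g x) = g x) \<and> c \<in> carrier G \<and>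
           (\<forall>x\<in>carrier G. g x = c \<otimes> (f ^^ n) x \<otimes> inv c)"
proof -
  interpret group G by fact
  note f = assms(2) and x0 = assms(3) and rel = assms(4)
  have fc: "\<And>x. x \<in> carrier G \<Longrightarrow> f x \<in> carrier G" by (rule hom_in_carrier[OF f])
  have fm: "\<And>a b. a \<in> carrier G \<Longrightarrow> b \<in> carrier G \<Longrightarrow> f (a \<otimes> b) = f a \<otimes> f b"
    by (rule hom_mult[OF f])
  have fp: "\<And>a n. a \<in> carrier G \<Longrightarrow> f (a [^] (n::nat)) = f a [^] n"
    by (rule hom_nat_pow[OF f _ assms(1) assms(1)])
  have itc: "(f ^^ i) z \<in> carrier G" if "z \<in> carrier G" for i z
    using that by (induction i) (auto intro: fc)
  have itp: "(f ^^ i) (z [^] (k::nat)) = ((f ^^ i) z) [^] k" if "z \<in> carrier G" for i z k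
    using that by (induction i) (auto simp: fp itc)
  have iterA: "\<forall>z\<in>carrier G. (f ^^ Suc i) z = inv (x0 [^] i) \<otimes> f z \<otimes> x0 [^] i" for i
  proof (induction i)
    case 0 then show ?case using fc by simp
  next
    case (Suc i)
    show ?case
    proof
      fix z assume z: "z \<in> carrier G"
      have "(f ^^ Suc (Suc i)) z = (f ^^ Suc i) (f z)" by (simp only: funpow_Suc_right comp_def)
      also have "\<dots> = inv (x0 [^] i) \<otimes> f (f z) \<otimes> x0 [^] i"
        using Suc.IH fc[OF z] by (rule bspec)
      also have "\<dots> = inv (x0 \<otimes> x0 [^] i) \<otimes> f z \<otimes> (x0 \<otimes> x0 [^] i)"
        using rel[OF z] x0 z fc by (simp add: inv_mult_group m_assoc)
      also have "\<dots> = inv (x0 [^] Suc i) \<otimes> f z \<otimes> x0 [^] Suc i"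
        by (simp only: nat_pow_Suc2[OF x0])
      finally show "(f ^^ Suc (Suc i)) z = inv (x0 [^] Suc i) \<otimes> f z \<otimes> x0 [^] Suc i" .
    qed
  qed
  have iter: "(f ^^ Suc i) z = inv (x0 [^] i) \<otimes> f z \<otimes> x0 [^] i" if z: "z \<in> carrier G" for i z
    using iterA z by (rule bspec)
  obtain k i :: nat where k: "k \<ge> 1" and hk: "((f ^^ i) x0) [^] k \<in> (f ^^ (Suc i)) ` carrier G"
    using assms(5) by blast
  from hk obtain y where y: "y \<in> carrier G" and hy: "((f ^^ i) x0) [^] k = (f ^^ Suc i) y"
    by blast
  have "(f ^^ Suc i) (x0 [^] k) = (f ^^ Suc i) (f y)"
  proof -
    have "(f ^^ i) (x0 [^] k) = (f ^^ i) (f y)" using hy itp[OF x0]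
      by (simp only: funpow_Suc_right comp_def)
    then show ?thesis by (simp only: funpow.simps comp_def)
  qed
  then have "inv (x0 [^] i) \<otimes> f (x0 [^] k) \<otimes> x0 [^] i = inv (x0 [^] i) \<otimes> f (f y) \<otimes> x0 [^] i"
    using iter x0 y fc by simp
  then have x1k: "f x0 [^] k = f (f y)" using x0 y fc fp by (simp add: m_assoc)
  define y0 where "y0 = x0 \<otimes> f x0 \<otimes> inv x0"
  have y0c: "y0 \<in> carrier G" unfolding y0_def using x0 fc by simp
  have rel0: "f (f x) = inv y0 \<otimes> f x \<otimes> y0" if x: "x \<in> carrier G" for x
  proof -
    have "inv y0 \<otimes> f x \<otimes> y0 = x0 \<otimes> (inv (f x0) \<otimes> inv x0 \<otimes> f x \<otimes> x0 \<otimes> f x0) \<otimes> inv x0"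
      unfolding y0_def using x x0 fc by (simp add: inv_mult_group m_assoc)
    also have "\<dots> = x0 \<otimes> (inv x0 \<otimes> inv x0 \<otimes> f x \<otimes> x0 \<otimes> x0) \<otimes> inv x0"
      using E_lem[OF f x0 rel x] by simp
    also have "\<dots> = inv x0 \<otimes> f x \<otimes> x0" using x x0 fc by (simp add: m_assoc)
    finally show ?thesis using rel[OF x] by simp
  qed
  have y0k: "y0 [^] k = f y"
  proof -
    have "y0 [^] k = x0 \<otimes> f x0 [^] k \<otimes> inv x0" unfolding y0_def using conj_pow x0 fc by simp
    also have "\<dots> = f y" using x1k rel[OF y] x0 y fc by (simp add: m_assoc)
    finally show ?thesis .
  qed
  have L: "(\<lambda>x. y0 \<otimes> f x \<otimes> inv y0) \<in> hom G G \<and>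
         (\<forall>x\<in>carrier G. y0 \<otimes> f (y0 \<otimes> f x \<otimes> inv y0) \<otimes> inv y0 = y0 \<otimes> f x \<otimes> inv y0)"
    by (rule L0[OF f y0c rel0 k y y0k])
  show ?thesis
    apply (rule exI[of _ 1], rule exI[of _ "\<lambda>x. y0 \<otimes> f x \<otimes> inv y0"], rule exI[of _ y0])
    using L y0c by simp
qed

end
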